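(* Let $r_0>0$, $\eta>0$, and let $C_0\subset\mathbb{R}^2$ be the circle of radius $r_0$ centered at the origin, taken as the data set. For $r>0$ let $C_r$ be the circle of radius $r$ centered at the origin, and for $s\in\{1,2\}$ consider $$E_s(C_r)=\left(\int_{C_r} d(\mathbf{x})^{s}\, d\sigma\right)^{1/s}+\eta \left(\int_{C_r} |\kappa(\mathbf{x})|^{s}\,d\sigma\right)^{1/s}=(2\pi)^{1/s}\left(|r-r_0|\,r^{1/s}+\eta\, r^{1/s-1}\right),$$ where $d(\mathbf{x})$ is the distance from $\mathbf{x}$ to $C_0$ (so $d=|r-r_0|$ on $C_r$) and $\kappa=1/r$ is the curvature of $C_r$. Then, viewing $E_s(C_r)$ as a function of $r>0$: (i) for $s=1$, $r=r_0$ is a local minimizer of $E_1(C_r)$ for every $\eta>0$; (ii) for $s=2$, $r=r_0$ is a local minimizer of $E_2(C_r)$ if $\eta\le 2r_0^2$, and $r=\big(r_0+\sqrt{r_0^2+12\eta}\big)/6$ is a local minimizer of $E_2(C_r)$ if $\eta>2r_0^2$.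
   Context: $d\sigma$ denotes arc length on the circle. The energy is the paper's curvature-regularized reconstruction energy $E_s(\Gamma)=(\int_\Gamma |d|^s d\sigma)^{1/s}+\eta(\int_\Gamma|\kappa|^s d\sigma)^{1/s}$ restricted to circles concentric with the data circle. *)

theory Defs
  imports "HOL-Analysis.Analysis"
begin

definition circ :: "real \<Rightarrow> (real \<times> real) set" where
  "circ r = {x. norm x = r}"

text \<open>Line integral w.r.t. arc length over the circle C_r, via the parametrisation
  t \<mapsto> (r cos t, r sin t), t in [0, 2 pi], whose speed is r.\<close>
definition circ_integral :: "real \<Rightarrow> (real \<times> real \<Rightarrow> real) \<Rightarrow> real" where
  "circ_integral r f = integral {0..2*pi} (\<lambda>t. f (r * cos t, r * sin t) * r)"

definition energy :: "real \<Rightarrow> real \<Rightarrow> real \<Rightarrow> real \<Rightarrow> real" where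
  "energy s r0 \<eta> r =
     (circ_integral r (\<lambda>x. infdist x (circ r0) powr s)) powr (1 / s)
     + \<eta> * (circ_integral r (\<lambda>x. \<bar>1 / r\<bar> powr s)) powr (1 / s)"

definition local_minimizer :: "(real \<Rightarrow> real) \<Rightarrow> real \<Rightarrow> bool" where
  "local_minimizer f a \<longleftrightarrow> a > 0 \<and>
     (\<exists>\<epsilon>>0. \<forall>r>0. \<bar>r - a\<bar> < \<epsilon> \<longrightarrow> f a \<le> f r)"

end

theory Submission
  imports Defs
begin

lemma infdist_circ:
  assumes "r0 > 0"
  shows "infdist x (circ r0) = \<bar>norm x - r0\<bar>"
proof (rule antisym)
  have ne: "circ r0 \<noteq> {}"
  proof -
    have "(r0, 0) \<in> circ r0" using assms by (simp add: circ_def)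
    then show ?thesis by blast
  qed
  show "\<bar>norm x - r0\<bar> \<le> infdist x (circ r0)"
    unfolding infdist_def using ne
  proof (simp, intro cINF_greatest)
    show "circ r0 \<noteq> {}" by (fact ne)
    fix y assume "y \<in> circ r0"
    then have "norm y = r0" by (simp add: circ_def)
    then show "\<bar>norm x - r0\<bar> \<le> dist x y"
      by (metis dist_norm norm_triangle_ineq3)
  qed
  show "infdist x (circ r0) \<le> \<bar>norm x - r0\<bar>"
  proof (cases "x = 0")
    case True
    have "(r0, 0) \<in> circ r0" using assms by (simp add: circ_def)
    then have "infdist x (circ r0) \<le> dist x (r0, 0)" by (rule infdist_le)
    then show ?thesis using True assms by (simp add: dist_norm)
  next
    case False
    define y where "y = (r0 / norm x) *\<^sub>R x"
    have "y \<in> circ r0" using assms False by (simp add: circ_def y_def)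
    then have "infdist x (circ r0) \<le> dist x y" by (rule infdist_le)
    also have "dist x y = norm ((1 - r0 / norm x) *\<^sub>R x)"
      by (simp add: dist_norm y_def algebra_simps)
    also have "\<dots> = \<bar>1 - r0 / norm x\<bar> * norm x" by simp
    also have "\<dots> = \<bar>(1 - r0 / norm x) * norm x\<bar>" by (simp add: abs_mult)
    also have "(1 - r0 / norm x) * norm x = norm x - r0" using False
      by (simp add: algebra_simps)
    finally show ?thesis .
  qed
qed

lemma circ_integral_const:
  assumes "r > 0" and "\<And>x. norm x = r \<Longrightarrow> f x = c"
  shows "circ_integral r f = 2 * pi * r * c"
proof -
  have "\<And>t. norm (r * cos t, r * sin t) = r"
  proof -
    fix t
    have "norm (r * cos t, r * sin t) = sqrt ((r * cos t)^2 + (r * sin t)^2)"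
      by (simp add: norm_Pair)
    also have "(r * cos t)^2 + (r * sin t)^2 = r^2"
      by (simp add: power_mult_distrib flip: distrib_left)
    finally show "norm (r * cos t, r * sin t) = r" using assms by simp
  qed
  then have "circ_integral r f = integral {0..2*pi} (\<lambda>t. c * r)"
    unfolding circ_integral_def using assms by simp
  also have "\<dots> = 2 * pi * r * c" by simp
  finally show ?thesis .
qed

lemma powr2_nonneg: "(x::real) \<ge> 0 \<Longrightarrow> x powr 2 = x^2"
  by (cases "x = 0") (simp_all add: powr_numeral)

lemma E1_formula:
  assumes "r0 > 0" "r > 0"
  shows "energy 1 r0 \<eta> r = 2 * pi * r * \<bar>r - r0\<bar> + \<eta> * (2 * pi)"
proof -
  have a: "circ_integral r (\<lambda>x. infdist x (circ r0) powr 1) = 2 * pi * r * \<bar>r - r0\<bar>"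
    by (rule circ_integral_const) (use assms in \<open>simp_all add: infdist_circ\<close>)
  have b: "circ_integral r (\<lambda>x. \<bar>1 / r\<bar> powr 1) = 2 * pi"
  proof -
    have "circ_integral r (\<lambda>x. \<bar>1 / r\<bar> powr 1) = 2 * pi * r * (1 / r)"
      by (rule circ_integral_const) (use assms in simp_all)
    then show ?thesis using assms by simp
  qed
  show ?thesis unfolding energy_def using a b assms by simp
qed

lemma E2_formula:
  assumes "r0 > 0" "r > 0"
  shows "energy 2 r0 \<eta> r = sqrt (2 * pi) * (\<bar>r - r0\<bar> * sqrt r + \<eta> / sqrt r)"
proof -
  have a: "circ_integral r (\<lambda>x. infdist x (circ r0) powr 2) = 2 * pi * r * \<bar>r - r0\<bar>^2"
    by (rule circ_integral_const) (use assms in \<open>simp_all add: infdist_circ powr2_nonneg\<close>)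
  have b: "circ_integral r (\<lambda>x. \<bar>1 / r\<bar> powr 2) = 2 * pi * r * (1/r)^2"
    by (rule circ_integral_const) (use assms in \<open>simp_all add: powr2_nonneg\<close>)
  have c: "(2 * pi * r * \<bar>r - r0\<bar>^2) powr (1/2) = sqrt (2 * pi) * (\<bar>r - r0\<bar> * sqrt r)"
    using assms by (simp add: powr_half_sqrt real_sqrt_mult)
  have d: "(2 * pi * r * (1/r)^2) powr (1/2) = sqrt (2 * pi) / sqrt r"
  proof -
    have "2 * pi * r * (1/r)^2 = 2 * pi / r" using assms by (simp add: power2_eq_square)
    then show ?thesis using assms by (simp add: powr_half_sqrt real_sqrt_divide)
  qed
  show ?thesis unfolding energy_def using a b c d by (simp add: algebra_simps)
qed

definition gg :: "real \<Rightarrow> real \<Rightarrow> real \<Rightarrow> real" where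
  "gg r0 \<eta> u = \<bar>u^2 - r0\<bar> * u + \<eta> / u"

lemma E2_gg:
  assumes "r0 > 0" "r > 0"
  shows "energy 2 r0 \<eta> r = sqrt (2 * pi) * gg r0 \<eta> (sqrt r)"
  using E2_formula[OF assms] assms by (simp add: gg_def)

lemma case2:
  assumes "a > 0" "u > 0" "\<eta> \<le> 2 * a^4" "\<eta> > 0"
  shows "gg (a^2) \<eta> a \<le> gg (a^2) \<eta> u"
proof (cases "u \<ge> a")
  case True
  have "u^2 \<ge> a^2" using True assms by (simp add: power_mono)
  then have g: "gg (a^2) \<eta> u = (u^2 - a^2) * u + \<eta> / u" by (simp add: gg_def)
  have ga: "gg (a^2) \<eta> a = \<eta> / a" by (simp add: gg_def)
  have "u * a * (gg (a^2) \<eta> u - gg (a^2) \<eta> a) = (u - a) * ((u + a) * u^2 * a - \<eta>)"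
    unfolding g ga using assms by (simp add: field_simps power2_eq_square)
  moreover have "(u + a) * u^2 * a \<ge> 2 * a^4"
  proof -
    have "u + a \<ge> 2 * a" "u^2 \<ge> a^2" using True \<open>u^2 \<ge> a^2\<close> by auto
    then have "(u + a) * u^2 \<ge> 2 * a * a^2" by (intro mult_mono) (use assms in auto)
    then have "(u + a) * u^2 * a \<ge> 2 * a * a^2 * a" using assms by (simp add: mult_right_mono)
    moreover have "2 * a * a^2 * a = 2 * a^4" by (simp add: eval_nat_numeral)
    ultimately show ?thesis by simp
  qed
  ultimately have "u * a * (gg (a^2) \<eta> u - gg (a^2) \<eta> a) \<ge> 0"
    using True assms by simp
  moreover have "u * a > 0" using assms by simp
  ultimately have "gg (a^2) \<eta> u - gg (a^2) \<eta> a \<ge> 0"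
    by (simp add: zero_le_mult_iff)
  then show ?thesis by simp
next
  case False
  have "u^2 \<le> a^2" using False assms by (simp add: power_mono)
  then have g: "gg (a^2) \<eta> u = (a^2 - u^2) * u + \<eta> / u" by (simp add: gg_def)
  have "\<eta> / a \<le> \<eta> / u" using False assms by (simp add: frac_le)
  moreover have "(a^2 - u^2) * u \<ge> 0" using \<open>u^2 \<le> a^2\<close> assms by simp
  moreover have "gg (a^2) \<eta> a = \<eta> / a" by (simp add: gg_def)
  ultimately show ?thesis using g by linarith
qed

lemma case3:
  assumes "a > 0" "b > a" "u > a" "\<eta> = b^2 * (3 * b^2 - a^2)"
  shows "gg (a^2) \<eta> b \<le> gg (a^2) \<eta> u"
proof -
  have "u^2 > a^2" "b^2 > a^2" using assms by (simp_all add: power_strict_mono)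
  then have gu: "gg (a^2) \<eta> u = (u^2 - a^2) * u + \<eta> / u"
    and gb: "gg (a^2) \<eta> b = (b^2 - a^2) * b + \<eta> / b" by (simp_all add: gg_def)
  have eq: "u * b * (gg (a^2) \<eta> u - gg (a^2) \<eta> b) = b * (u - b)^2 * (u^2 + 2*u*b + 3*b^2 - a^2)"
    unfolding gu gb using assms by (simp add: assms(4) field_simps power2_eq_square)
  moreover have "u^2 + 2*u*b + 3*b^2 - a^2 \<ge> 0"
  proof -
    have "u * b > 0" using assms by simp
    moreover have "2*u*b = 2*(u*b)" by simp
    ultimately show ?thesis using \<open>b^2 > a^2\<close> zero_le_power2[of u] zero_le_power2[of b] by linarith
  qed
  moreover have "b * (u - b)^2 * (u^2 + 2*u*b + 3*b^2 - a^2) \<ge> 0"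
    using assms \<open>u^2 + 2*u*b + 3*b^2 - a^2 \<ge> 0\<close> by simp
  ultimately have "u * b * (gg (a^2) \<eta> u - gg (a^2) \<eta> b) \<ge> 0" by (simp only: eq)
  moreover have "u * b > 0" using assms by simp
  ultimately have "gg (a^2) \<eta> u - gg (a^2) \<eta> b \<ge> 0"
    by (simp add: zero_le_mult_iff)
  then show ?thesis by simp
qed

theorem proposition2:
  fixes r0 \<eta> :: real
  assumes "r0 > 0" and "\<eta> > 0"
  shows "local_minimizer (energy 1 r0 \<eta>) r0
         \<and> (\<eta> \<le> 2 * r0^2 \<longrightarrow> local_minimizer (energy 2 r0 \<eta>) r0)
         \<and> (\<eta> > 2 * r0^2 \<longrightarrow>
               local_minimizer (energy 2 r0 \<eta>) ((r0 + sqrt (r0^2 + 12 * \<eta>)) / 6))"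
proof (intro conjI impI)
  show "local_minimizer (energy 1 r0 \<eta>) r0"
    unfolding local_minimizer_def
  proof (intro conjI exI[of _ 1] allI impI)
    fix r :: real assume "r > 0"
    then show "energy 1 r0 \<eta> r0 \<le> energy 1 r0 \<eta> r"
      using assms by (simp add: E1_formula)
  qed (use assms in auto)
next
  assume h: "\<eta> \<le> 2 * r0^2"
  define a where "a = sqrt r0"
  have a: "a > 0" "a^2 = r0" using assms by (simp_all add: a_def)
  have a4: "a^4 = r0^2" using a(2) by (metis power_mult numeral_times_numeral semiring_norm(12) num_double)
  show "local_minimizer (energy 2 r0 \<eta>) r0"
    unfolding local_minimizer_def
  proof (intro conjI exI[of _ 1] allI impI)
    fix r :: real assume r: "r > 0"
    have "gg (a^2) \<eta> a \<le> gg (a^2) \<eta> (sqrt r)"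
      using a a4 h assms r by (intro case2) simp_all
    then show "energy 2 r0 \<eta> r0 \<le> energy 2 r0 \<eta> r"
      using assms r a by (simp add: E2_gg a_def)
  qed (use assms in auto)
next
  assume h: "\<eta> > 2 * r0^2"
  define S where "S = sqrt (r0^2 + 12 * \<eta>)"
  define rs where "rs = (r0 + S) / 6"
  have S2: "S^2 = r0^2 + 12 * \<eta>" "S \<ge> 0" using assms by (simp_all add: S_def)
  have "S^2 > (5 * r0)^2" using S2 h by (simp add: power_mult_distrib)
  then have "S > 5 * r0" using S2 assms by (smt (verit) power_mono)
  then have rs: "rs > r0" by (simp add: rs_def)
  have eta: "\<eta> = rs * (3 * rs - r0)"
    using S2 unfolding rs_def by (simp add: field_simps power2_eq_square)
  define a where "a = sqrt r0"
  define b where "b = sqrt rs"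
  have a: "a > 0" "a^2 = r0" using assms by (simp_all add: a_def)
  have b: "b > a" "b^2 = rs" using assms rs by (simp_all add: a_def b_def)
  show "local_minimizer (energy 2 r0 \<eta>) ((r0 + sqrt (r0^2 + 12 * \<eta>)) / 6)"
    unfolding local_minimizer_def rs_def[symmetric] S_def[symmetric]
  proof (intro conjI exI[of _ "rs - r0"] allI impI)
    fix r :: real assume r: "r > 0" "\<bar>r - rs\<bar> < rs - r0"
    then have "r > r0" by linarith
    then have "sqrt r > a" by (simp add: a_def)
    then have "gg (a^2) \<eta> b \<le> gg (a^2) \<eta> (sqrt r)"
      using a b eta by (intro case3) simp_all
    then show "energy 2 r0 \<eta> rs \<le> energy 2 r0 \<eta> r"
      using assms r rs a b by (simp add: E2_gg b_def)
  qed (use assms rs in auto)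
qed

end
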